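(* Let $r\ge0$, $\varphi\in[0,2\pi)$, $\sigma_0>0$, $\alpha_0\in\mathbb{C}$. Consider Bayesian estimation of a displacement $\alpha=\alpha_{\mathrm R}+i\alpha_{\mathrm I}$ with Gaussian prior $p(\alpha)=\frac{1}{2\pi\sigma_0^2}\exp(-|\alpha-\alpha_0|^2/(2\sigma_0^2))$, probe state $\hat S(re^{i\varphi})|0\rangle$, encoded state $\hat D(\alpha)\hat S(re^{i\varphi})|0\rangle$, and homodyne detection of $\hat q$, i.e. likelihood $p(q|\alpha)=|\langle q|\hat D(\alpha)\hat S(re^{i\varphi})|0\rangle|^2$, $q\in\mathbb{R}$. Write $\Gamma=\cosh 2r-\cos\varphi\,\sinh 2r$. Then: (i) the posterior marginal of $\alpha_{\mathrm I}$ coincides with the prior marginal, and the posterior marginal of $\alpha_{\mathrm R}$ is Gaussian with mean $\hat\alpha_{\mathrm R}(q)=\dfrac{2\sqrt2\,\sigma_0^2 q+\alpha_{0,\mathrm R}\Gamma}{4\sigma_0^2+\Gamma}$ and variance $\dfrac{\sigma_0^2\Gamma}{4\sigma_0^2+\Gamma}$, independent of $q$; (ii) this variance is minimized over $\varphi$ at $\varphi=0$, where the average posterior variance of $\alpha_{\mathrm R}$ equals $\bar V^{\hat q}_{\mathrm{post}}=\big(\tfrac{1}{\sigma_0^2}+4e^{2r}\big)^{-1}$; (iii) if the same measurement (probe $\hat S(r)|0\rangle$, homodyne of $\hat q$) is repeated $m$ times on independent copies with Bayesian updating (each posterior used as the prior of the next round), the posterior of $\alpha_{\mathrm R}$ after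 $m$ rounds is Gaussian with variance $\sigma_m^2=\big(\tfrac{1}{\sigma_0^2}+4m\,e^{2r}\big)^{-1}$, independent of the outcomes.
   Context: Single bosonic mode with $[\hat a,\hat a^\dagger]=1$, quadrature $\hat q=(\hat a+\hat a^\dagger)/\sqrt2$ with generalized eigenstates $|q\rangle$ normalized as $\langle q|q'\rangle=\delta(q-q')$; homodyne detection of $\hat q$ is the POVM $\{|q\rangle\langle q|\}_{q\in\mathbb{R}}$. Displacement operator $\hat D(\alpha)=\exp(\alpha\hat a^\dagger-\alpha^*\hat a)$, squeezing operator $\hat S(\xi)=\exp[\tfrac12(\xi^*\hat a^2-\xi\hat a^{\dagger2})]$, $|0\rangle$ the vacuum. Posterior via Bayes' law $p(\alpha|q)=p(q|\alpha)p(\alpha)/\int d\alpha'\,p(q|\alpha')p(\alpha')$; the average posterior variance is the posterior variance averaged over outcomes $q$ with respect to $p(q)=\int d\alpha\,p(q|\alpha)p(\alpha)$. *)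

theory Defs
  imports "HOL-Probability.Probability"
begin

text \<open>Position-representation wavefunction of the squeezed vacuum
  S(r e^{i phi})|0>, with S(xi) = exp[(xi^* a^2 - xi a^{dagger 2})/2],
  q = (a + a^dagger)/sqrt 2, <q|q'> = delta(q - q').\<close>
definition squeezed_wf :: "real \<Rightarrow> real \<Rightarrow> real \<Rightarrow> complex" where
  "squeezed_wf r \<phi> q =
     complex_of_real (pi powr (-1/4)) * inverse (csqrt (cosh r - cis \<phi> * sinh r)) *
     exp (- (complex_of_real (q\<^sup>2 / 2)) * (1 + cis \<phi> * tanh r) / (1 - cis \<phi> * tanh r))"

text \<open>Action of the displacement operator D(alpha) in position representation:
  (D(alpha) psi)(q) = exp(i(sqrt 2 Im alpha q - Re alpha Im alpha)) psi(q - sqrt 2 Re alpha).\<close>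
definition displace_wf :: "complex \<Rightarrow> (real \<Rightarrow> complex) \<Rightarrow> real \<Rightarrow> complex" where
  "displace_wf \<alpha> \<psi> q =
     exp (\<i> * complex_of_real (sqrt 2 * Im \<alpha> * q - Re \<alpha> * Im \<alpha>)) * \<psi> (q - sqrt 2 * Re \<alpha>)"

definition likelihood :: "real \<Rightarrow> real \<Rightarrow> real \<Rightarrow> complex \<Rightarrow> real" where
  "likelihood r \<phi> q \<alpha> = (cmod (displace_wf \<alpha> (squeezed_wf r \<phi>) q))\<^sup>2"

definition gauss_prior :: "complex \<Rightarrow> real \<Rightarrow> complex \<Rightarrow> real" where
  "gauss_prior \<alpha>0 \<sigma>0 \<alpha> = exp (- (cmod (\<alpha> - \<alpha>0))\<^sup>2 / (2 * \<sigma>0\<^sup>2)) / (2 * pi * \<sigma>0\<^sup>2)"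

definition bayes_update :: "(real \<Rightarrow> complex \<Rightarrow> real) \<Rightarrow> (complex \<Rightarrow> real) \<Rightarrow> real \<Rightarrow> complex \<Rightarrow> real" where
  "bayes_update lik p q \<alpha> = lik q \<alpha> * p \<alpha> / (LINT \<beta>|lborel. lik q \<beta> * p \<beta>)"

definition evidence :: "(real \<Rightarrow> complex \<Rightarrow> real) \<Rightarrow> (complex \<Rightarrow> real) \<Rightarrow> real \<Rightarrow> real" where
  "evidence lik p q = (LINT \<beta>|lborel. lik q \<beta> * p \<beta>)"

definition marg_R :: "(complex \<Rightarrow> real) \<Rightarrow> real \<Rightarrow> real" where
  "marg_R f x = (LINT y|lborel. f (Complex x y))"

definition marg_I :: "(complex \<Rightarrow> real) \<Rightarrow> real \<Rightarrow> real" where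
  "marg_I f y = (LINT x|lborel. f (Complex x y))"

definition mean_R :: "(complex \<Rightarrow> real) \<Rightarrow> real" where
  "mean_R f = (LINT x|lborel. x * marg_R f x)"

definition var_R :: "(complex \<Rightarrow> real) \<Rightarrow> real" where
  "var_R f = (LINT x|lborel. (x - mean_R f)\<^sup>2 * marg_R f x)"

definition avg_post_var_R :: "(real \<Rightarrow> complex \<Rightarrow> real) \<Rightarrow> (complex \<Rightarrow> real) \<Rightarrow> real" where
  "avg_post_var_R lik p = (LINT q|lborel. evidence lik p q * var_R (bayes_update lik p q))"

primrec seq_post :: "(real \<Rightarrow> complex \<Rightarrow> real) \<Rightarrow> (complex \<Rightarrow> real) \<Rightarrow> (nat \<Rightarrow> real) \<Rightarrow> nat \<Rightarrow> complex \<Rightarrow> real" where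
  "seq_post lik p qs 0 = p"
| "seq_post lik p qs (Suc k) = bayes_update lik (seq_post lik p qs k) (qs k)"

definition Gamma_sq :: "real \<Rightarrow> real \<Rightarrow> real" where
  "Gamma_sq r \<phi> = cosh (2 * r) - cos \<phi> * sinh (2 * r)"

end

theory Submission
  imports Defs
begin


lemma of_real_hyp:
  "cosh (complex_of_real r) = complex_of_real (cosh r)"
  "sinh (complex_of_real r) = complex_of_real (sinh r)"
  "tanh (complex_of_real r) = complex_of_real (tanh r)"
  by (simp_all add: cosh_def sinh_def tanh_def scaleR_conv_of_real flip: exp_of_real)

lemma Gamma_sq_pos: "Gamma_sq r \<phi> > 0"
proof -
  have "\<bar>cos \<phi> * sinh (2*r)\<bar> \<le> \<bar>sinh (2*r)\<bar>"
    by (simp add: abs_mult mult_left_le_one_le)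
  moreover have "\<bar>sinh (2*r)\<bar> < cosh (2*r)"
  proof (rule power2_less_imp_less)
    show "\<bar>sinh (2*r)\<bar>\<^sup>2 < (cosh (2*r))\<^sup>2" using cosh_square_eq[of "2*r"] by simp
  qed simp
  ultimately show ?thesis unfolding Gamma_sq_def by linarith
qed

lemma Gamma_alt: "Gamma_sq r \<phi> = (cosh r - cos \<phi> * sinh r)\<^sup>2 + (sin \<phi> * sinh r)\<^sup>2"
proof -
  have "(cosh r - cos \<phi> * sinh r)\<^sup>2 + (sin \<phi> * sinh r)\<^sup>2
     = cosh r ^ 2 + (cos \<phi>^2 + sin \<phi>^2) * sinh r ^2 - 2 * cos \<phi> * sinh r * cosh r"
    by algebra
  then show ?thesis unfolding Gamma_sq_def cosh_double sinh_double by simp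
qed

lemma sq_wf_norm:
  "(cmod (squeezed_wf r \<phi> y))\<^sup>2 = exp (- y\<^sup>2 / Gamma_sq r \<phi>) / sqrt (pi * Gamma_sq r \<phi>)"
proof -
  define c where "c = cosh r"
  define d where "d = sinh r"
  define a where "a = cos \<phi>"
  define b where "b = sin \<phi>"
  define G where "G = Gamma_sq r \<phi>"
  have G: "G = (c - a*d)\<^sup>2 + (b*d)\<^sup>2" unfolding G_def Gamma_alt a_def b_def c_def d_def ..
  have Gpos: "G > 0" unfolding G_def by (rule Gamma_sq_pos)
  have cpos: "c > 0" unfolding c_def by simp
  have cd: "c^2 = d^2 + 1" unfolding c_def d_def by (rule cosh_square_eq)
  have ab: "a^2 + b^2 = 1" unfolding a_def b_def by simp
  have w: "cmod (cosh (complex_of_real r) - cis \<phi> * sinh (complex_of_real r)) = sqrt G"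
    unfolding of_real_hyp G cmod_def by (simp add: a_def b_def c_def d_def)
  have th: "tanh r = d / c" unfolding c_def d_def tanh_def ..
  define z where "z = cis \<phi> * complex_of_real (d/c)"
  have "Re ((1 + z) / (1 - z)) = ((1 + a*(d/c)) * (1 - a*(d/c)) + (b*(d/c)) * (-(b*(d/c)))) /
        ((1 - a*(d/c))\<^sup>2 + (-(b*(d/c)))\<^sup>2)"
    unfolding Re_divide z_def by (simp add: a_def b_def)
  also have "\<dots> = 1 / G"
  proof -
    have num: "(1 + a*(d/c)) * (1 - a*(d/c)) + (b*(d/c)) * (-(b*(d/c))) = 1 / c^2"
    proof -
      have "(1 + a*(d/c)) * (1 - a*(d/c)) + (b*(d/c)) * (-(b*(d/c))) = 1 - (a^2+b^2) * (d^2/c^2)"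
        by (simp add: algebra_simps power2_eq_square add_divide_distrib)
      also have "\<dots> = (c^2 - d^2) / c^2" using ab cpos by (simp add: field_simps)
      also have "\<dots> = 1 / c^2" using cd by simp
      finally show ?thesis .
    qed
    have den: "(1 - a*(d/c))\<^sup>2 + (-(b*(d/c)))\<^sup>2 = G / c^2"
    proof -
      have "1 - a*(d/c) = (c - a*d)/c" using cpos by (simp add: field_simps)
      moreover have "-(b*(d/c)) = -(b*d)/c" by simp
      ultimately show ?thesis unfolding G by (simp add: power_divide add_divide_distrib)
    qed
    show ?thesis unfolding num den using cpos Gpos by simp
  qed
  finally have reZ: "Re ((1 + z) / (1 - z)) = 1 / G" .
  have e: "cmod (exp (- complex_of_real (y\<^sup>2 / 2) * (1 + z) / (1 - z))) = exp (- y\<^sup>2 / (2 * G))"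
  proof -
    have "- complex_of_real (y\<^sup>2 / 2) * (1 + z) / (1 - z) = complex_of_real (- y\<^sup>2 / 2) * ((1 + z) / (1 - z))"
      by simp
    moreover have "Re (complex_of_real (- y\<^sup>2 / 2) * ((1 + z) / (1 - z))) = (- y\<^sup>2 / 2) * Re ((1 + z) / (1 - z))"
    proof -
      have "\<And>k w. Re (complex_of_real k * w) = k * Re w" by simp
      then show ?thesis by blast
    qed
    ultimately have "Re (- complex_of_real (y\<^sup>2 / 2) * (1 + z) / (1 - z)) = - y\<^sup>2 / (2 * G)"
      using reZ by simp
    then show ?thesis by (simp only: norm_exp_eq_Re)
  qed
  have p: "(pi powr (-1/4))\<^sup>2 = 1 / sqrt pi"
  proof -
    have 1: "(pi powr (-1/4))\<^sup>2 = pi powr (-1/4 + -1/4)" unfolding power2_eq_square by (rule powr_add[symmetric])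
    have 2: "(-1/4 + -1/4) = - (1/2 :: real)" by simp
    have 3: "pi powr (- (1/2)) = inverse (pi powr (1/2))" by (rule powr_minus)
    have 4: "pi powr (1/2) = sqrt pi" by (rule powr_half_sqrt) simp
    show ?thesis unfolding 1 2 3 4 by (simp add: divide_inverse)
  qed
  define W where "W = cosh (complex_of_real r) - cis \<phi> * sinh (complex_of_real r)"
  have sq: "squeezed_wf r \<phi> y = complex_of_real (pi powr (-1/4)) * inverse (csqrt W) *
      exp (- complex_of_real (y\<^sup>2 / 2) * (1 + z) / (1 - z))"
    unfolding squeezed_wf_def z_def W_def of_real_hyp(3) th ..
  have "cmod (squeezed_wf r \<phi> y) = pi powr (-1/4) * inverse (sqrt (sqrt G)) * exp (- y\<^sup>2 / (2 * G))"
    unfolding sq norm_mult norm_inverse e norm_csqrt W_def w by simp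
  then have "(cmod (squeezed_wf r \<phi> y))\<^sup>2 = (pi powr (-1/4))\<^sup>2 * (inverse (sqrt (sqrt G)))\<^sup>2 * (exp (- y\<^sup>2 / (2 * G)))\<^sup>2"
    by (simp add: power_mult_distrib)
  also have "\<dots> = (1 / sqrt pi) * (1 / sqrt G) * exp (- y\<^sup>2 / G)"
  proof -
    have "(inverse (sqrt (sqrt G)))\<^sup>2 = 1 / sqrt G" using Gpos by (simp add: power_inverse divide_inverse real_sqrt_pow2)
    moreover have "(exp (- y\<^sup>2 / (2 * G)))\<^sup>2 = exp (- y\<^sup>2 / G)"
      by (simp add: power2_eq_square flip: exp_add)
    ultimately show ?thesis unfolding p by (simp only:)
  qed
  also have "\<dots> = exp (- y\<^sup>2 / G) / sqrt (pi * G)"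
    by (simp add: real_sqrt_mult)
  finally show ?thesis unfolding G_def .
qed



lemma likelihood_nd:
  "likelihood r \<phi> q \<alpha> = normal_density (sqrt 2 * Re \<alpha>) (sqrt (Gamma_sq r \<phi> / 2)) q"
proof -
  define G where "G = Gamma_sq r \<phi>"
  have G: "G > 0" unfolding G_def by (rule Gamma_sq_pos)
  have e1: "cmod (exp (\<i> * complex_of_real t)) = 1" for t
    by (simp only: norm_exp_eq_Re) simp
  have "likelihood r \<phi> q \<alpha> = (cmod (squeezed_wf r \<phi> (q - sqrt 2 * Re \<alpha>)))\<^sup>2"
    unfolding likelihood_def displace_wf_def norm_mult e1 by (simp only: mult_1)
  also have "\<dots> = exp (- (q - sqrt 2 * Re \<alpha>)\<^sup>2 / G) / sqrt (pi * G)"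
    unfolding G_def by (rule sq_wf_norm)
  also have "\<dots> = normal_density (sqrt 2 * Re \<alpha>) (sqrt (G / 2)) q"
  proof -
    have s2: "(sqrt (G/2))\<^sup>2 = G/2" using G by simp
    have a: "2*pi*(G/2) = pi*G" "2*(G/2) = G" by simp_all
    show ?thesis unfolding normal_density_def s2 a by simp
  qed
  finally show ?thesis unfolding G_def .
qed

lemma gauss_prior_nd:
  assumes "\<sigma> > 0"
  shows "gauss_prior \<alpha>0 \<sigma> \<alpha> = normal_density (Re \<alpha>0) \<sigma> (Re \<alpha>) * normal_density (Im \<alpha>0) \<sigma> (Im \<alpha>)"
proof -
  have c: "(cmod (\<alpha> - \<alpha>0))\<^sup>2 = (Re \<alpha> - Re \<alpha>0)\<^sup>2 + (Im \<alpha> - Im \<alpha>0)\<^sup>2"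
    by (simp add: cmod_power2)
  have e: "exp (- ((Re \<alpha> - Re \<alpha>0)\<^sup>2 + (Im \<alpha> - Im \<alpha>0)\<^sup>2) / (2 * \<sigma>\<^sup>2))
     = exp (- (Re \<alpha> - Re \<alpha>0)\<^sup>2 / (2 * \<sigma>\<^sup>2)) * exp (- (Im \<alpha> - Im \<alpha>0)\<^sup>2 / (2 * \<sigma>\<^sup>2))"
    by (simp add: exp_add[symmetric] add_divide_distrib diff_divide_distrib)
  have s: "1 / sqrt (2 * pi * \<sigma>\<^sup>2) * (1 / sqrt (2 * pi * \<sigma>\<^sup>2)) = 1 / (2 * pi * \<sigma>\<^sup>2)"
    by simp
  have p2: "(Re \<alpha>0 - Re \<alpha>)\<^sup>2 = (Re \<alpha> - Re \<alpha>0)\<^sup>2" "(Im \<alpha>0 - Im \<alpha>)\<^sup>2 = (Im \<alpha> - Im \<alpha>0)\<^sup>2"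
    by (simp_all add: power2_commute)
  define D where "D = 2 * pi * \<sigma>\<^sup>2"
  have g: "A * B / D = (1 / sqrt D * A) * (1 / sqrt D * B)" for A B
  proof -
    have "A * B / D = (1 / sqrt D * (1 / sqrt D)) * (A * B)" unfolding D_def s by simp
    also have "\<dots> = (1 / sqrt D * A) * (1 / sqrt D * B)" by (simp only: mult_ac)
    finally show ?thesis .
  qed
  show ?thesis unfolding gauss_prior_def normal_density_def c e p2 D_def[symmetric] by (rule g)
qed



lemma exp_identity:
  fixes s \<sigma> w q x \<mu> :: real
  assumes s: "s > 0" and \<sigma>: "\<sigma> > 0" and w: "w * w = 2"
  defines "T \<equiv> s\<^sup>2 + 2 * \<sigma>\<^sup>2"
  shows "- (q - w * x)\<^sup>2 / (2 * s\<^sup>2) + - (x - \<mu>)\<^sup>2 / (2 * \<sigma>\<^sup>2) =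
         - (q - w * \<mu>)\<^sup>2 / (2 * T) + - (x - (w * \<sigma>\<^sup>2 * q + \<mu> * s\<^sup>2) / T)\<^sup>2 / (2 * (s\<^sup>2 * \<sigma>\<^sup>2 / T))"
proof -
  have T: "T > 0" unfolding T_def using s \<sigma> by (simp add: add_pos_pos)
  have key: "\<sigma>\<^sup>2 * T * (q - w * x)\<^sup>2 + s\<^sup>2 * T * (x - \<mu>)\<^sup>2 = s\<^sup>2 * \<sigma>\<^sup>2 * (q - w * \<mu>)\<^sup>2 + (T * x - (w * \<sigma>\<^sup>2 * q + \<mu> * s\<^sup>2))\<^sup>2"
  proof -
    have "\<sigma>\<^sup>2 * T * (q - w * x)\<^sup>2 + s\<^sup>2 * T * (x - \<mu>)\<^sup>2 - (s\<^sup>2 * \<sigma>\<^sup>2 * (q - w * \<mu>)\<^sup>2 + (T * x - (w * \<sigma>\<^sup>2 * q + \<mu> * s\<^sup>2))\<^sup>2)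
       = (w * w - 2) * (\<sigma>\<^sup>2 * T * x\<^sup>2 - s\<^sup>2 * \<sigma>\<^sup>2 * \<mu>\<^sup>2 - \<sigma>\<^sup>2 * \<sigma>\<^sup>2 * q\<^sup>2)"
      unfolding T_def by algebra
    then show ?thesis using w by simp
  qed
  have l: "- (q - w * x)\<^sup>2 / (2 * s\<^sup>2) + - (x - \<mu>)\<^sup>2 / (2 * \<sigma>\<^sup>2) = - (\<sigma>\<^sup>2 * T * (q - w * x)\<^sup>2 + s\<^sup>2 * T * (x - \<mu>)\<^sup>2) / (2 * s\<^sup>2 * \<sigma>\<^sup>2 * T)"
    using s \<sigma> T by (simp add: field_simps)
  have r: "- (q - w * \<mu>)\<^sup>2 / (2 * T) + - (x - (w * \<sigma>\<^sup>2 * q + \<mu> * s\<^sup>2) / T)\<^sup>2 / (2 * (s\<^sup>2 * \<sigma>\<^sup>2 / T))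
     = - (s\<^sup>2 * \<sigma>\<^sup>2 * (q - w * \<mu>)\<^sup>2 + (T * x - (w * \<sigma>\<^sup>2 * q + \<mu> * s\<^sup>2))\<^sup>2) / (2 * s\<^sup>2 * \<sigma>\<^sup>2 * T)"
  proof -
    have "x - (w * \<sigma>\<^sup>2 * q + \<mu> * s\<^sup>2) / T = (T * x - (w * \<sigma>\<^sup>2 * q + \<mu> * s\<^sup>2)) / T"
      using T by (simp add: field_simps)
    then show ?thesis using s \<sigma> T by (simp add: field_simps power_divide power2_eq_square)
  qed
  show ?thesis unfolding l r key ..
qed

lemma nd_prod:
  fixes s \<sigma> q x \<mu> :: real
  assumes s: "s > 0" and \<sigma>: "\<sigma> > 0"
  defines "T \<equiv> s\<^sup>2 + 2 * \<sigma>\<^sup>2"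
  shows "normal_density (sqrt 2 * x) s q * normal_density \<mu> \<sigma> x =
    normal_density (sqrt 2 * \<mu>) (sqrt T) q *
    normal_density ((sqrt 2 * \<sigma>\<^sup>2 * q + \<mu> * s\<^sup>2) / T) (sqrt (s\<^sup>2 * \<sigma>\<^sup>2 / T)) x"
proof -
  have T: "T > 0" unfolding T_def using s \<sigma> by (simp add: add_pos_pos)
  have V: "s\<^sup>2 * \<sigma>\<^sup>2 / T > 0" using s \<sigma> T by simp
  have sT: "(sqrt T)\<^sup>2 = T" using T by simp
  have sV: "(sqrt (s\<^sup>2 * \<sigma>\<^sup>2 / T))\<^sup>2 = s\<^sup>2 * \<sigma>\<^sup>2 / T" using V by simp
  have w: "sqrt 2 * sqrt 2 = (2::real)" by simp
  have E: "- (q - sqrt 2 * x)\<^sup>2 / (2 * s\<^sup>2) + - (x - \<mu>)\<^sup>2 / (2 * \<sigma>\<^sup>2) =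
         - (q - sqrt 2 * \<mu>)\<^sup>2 / (2 * T) + - (x - (sqrt 2 * \<sigma>\<^sup>2 * q + \<mu> * s\<^sup>2) / T)\<^sup>2 / (2 * (s\<^sup>2 * \<sigma>\<^sup>2 / T))"
    unfolding T_def by (rule exp_identity[OF s \<sigma> w])
  have P: "1 / sqrt (2 * pi * s\<^sup>2) * (1 / sqrt (2 * pi * \<sigma>\<^sup>2)) =
      1 / sqrt (2 * pi * T) * (1 / sqrt (2 * pi * (s\<^sup>2 * \<sigma>\<^sup>2 / T)))"
  proof -
    have "(2 * pi * s\<^sup>2) * (2 * pi * \<sigma>\<^sup>2) = (2 * pi * T) * (2 * pi * (s\<^sup>2 * \<sigma>\<^sup>2 / T))"
      using T by (simp add: field_simps)
    then show ?thesis by (simp add: real_sqrt_mult[symmetric])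
  qed
  have g: "(a * exp e1) * (b * exp e2) = (a * b) * exp (e1 + e2)" for a b e1 e2 :: real
    by (simp add: exp_add)
  show ?thesis unfolding normal_density_def sT sV g E P ..
qed



lemma nn_complex_prod:
  fixes f g :: "real \<Rightarrow> ennreal"
  assumes [measurable]: "f \<in> borel_measurable borel" "g \<in> borel_measurable borel"
  shows "(\<integral>\<^sup>+\<alpha>. f (Re \<alpha>) * g (Im \<alpha>) \<partial>lborel) = (\<integral>\<^sup>+x. f x \<partial>lborel) * (\<integral>\<^sup>+y. g y \<partial>lborel)"
proof -
  define F where "F = (\<lambda>b::complex. if b = 1 then f else g)"
  have m: "\<And>b. b \<in> Basis \<Longrightarrow> F b \<in> borel_measurable borel" unfolding F_def by simp
  have n: "\<And>b x. b \<in> Basis \<Longrightarrow> 0 \<le> F b x" by simp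
  have i1: "\<i> \<noteq> 1" by (simp add: complex_eq_iff)
  have "(\<integral>\<^sup>+x. (\<Prod>b\<in>Basis. F b (x \<bullet> b)) \<partial>lborel) = (\<Prod>b\<in>Basis. (\<integral>\<^sup>+x. F b x \<partial>lborel))"
    by (rule nn_integral_lborel_prod[OF m n])
  moreover have "(\<lambda>x::complex. \<Prod>b\<in>Basis. F b (x \<bullet> b)) = (\<lambda>\<alpha>. f (Re \<alpha>) * g (Im \<alpha>))"
    using i1 by (auto simp: Basis_complex_def F_def inner_complex_def mult.commute)
  moreover have "(\<Prod>b\<in>Basis. (\<integral>\<^sup>+x. F b x \<partial>lborel)) = (\<integral>\<^sup>+x. f x \<partial>lborel) * (\<integral>\<^sup>+y. g y \<partial>lborel)"
    using i1 by (auto simp: Basis_complex_def F_def mult.commute)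
  ultimately show ?thesis by simp
qed

lemma lint_complex_prod:
  fixes f g :: "real \<Rightarrow> real"
  assumes [measurable]: "f \<in> borel_measurable borel" "g \<in> borel_measurable borel"
    and fn: "\<And>x. f x \<ge> 0" and gn: "\<And>x. g x \<ge> 0"
    and fi: "integrable lborel f" and gi: "integrable lborel g"
  shows "has_bochner_integral lborel (\<lambda>\<alpha>. f (Re \<alpha>) * g (Im \<alpha>)) ((LINT x|lborel. f x) * (LINT y|lborel. g y))"
proof (rule has_bochner_integral_nn_integral)
  show "(\<lambda>\<alpha>. f (Re \<alpha>) * g (Im \<alpha>)) \<in> borel_measurable lborel" by measurable
  show "AE x in lborel. 0 \<le> f (Re x) * g (Im x)" using fn gn by simp
  show "0 \<le> (LINT x|lborel. f x) * (LINT y|lborel. g y)"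
    using fn gn by (simp add: integral_nonneg)
  have "(\<integral>\<^sup>+\<alpha>. ennreal (f (Re \<alpha>) * g (Im \<alpha>)) \<partial>lborel) = (\<integral>\<^sup>+\<alpha>. ennreal (f (Re \<alpha>)) * ennreal (g (Im \<alpha>)) \<partial>lborel)"
    using fn gn by (simp add: ennreal_mult)
  also have "\<dots> = (\<integral>\<^sup>+x. ennreal (f x) \<partial>lborel) * (\<integral>\<^sup>+y. ennreal (g y) \<partial>lborel)"
    by (rule nn_complex_prod) measurable
  also have "\<dots> = ennreal (LINT x|lborel. f x) * ennreal (LINT y|lborel. g y)"
    using fi gi fn gn by (simp add: nn_integral_eq_integral)
  also have "\<dots> = ennreal ((LINT x|lborel. f x) * (LINT y|lborel. g y))"
    using fn gn by (simp add: ennreal_mult integral_nonneg)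
  finally show "(\<integral>\<^sup>+\<alpha>. ennreal (f (Re \<alpha>) * g (Im \<alpha>)) \<partial>lborel) = ennreal ((LINT x|lborel. f x) * (LINT y|lborel. g y))" .
qed

lemma marg_R_prod: "marg_R (\<lambda>\<alpha>. A (Re \<alpha>) * B (Im \<alpha>)) x = A x * (LINT y|lborel. B y)"
  unfolding marg_R_def by simp

lemma marg_I_prod: "marg_I (\<lambda>\<alpha>. A (Re \<alpha>) * B (Im \<alpha>)) y = (LINT x|lborel. A x) * B y"
  unfolding marg_I_def by simp

lemma var_R_prod:
  assumes "V > 0" "\<tau> > 0"
  shows "var_R (\<lambda>\<alpha>. normal_density m V (Re \<alpha>) * normal_density \<nu> \<tau> (Im \<alpha>)) = V\<^sup>2"
proof -
  have mr: "marg_R (\<lambda>\<alpha>. normal_density m V (Re \<alpha>) * normal_density \<nu> \<tau> (Im \<alpha>)) = normal_density m V"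
    by (rule ext) (simp add: marg_R_prod integral_normal_density[OF assms(2)])
  have mean: "mean_R (\<lambda>\<alpha>. normal_density m V (Re \<alpha>) * normal_density \<nu> \<tau> (Im \<alpha>)) = m"
    unfolding mean_R_def mr using integral_normal_moment_nz_1[OF assms(1), of m]
    by (simp add: mult.commute)
  show ?thesis unfolding var_R_def mean mr
    using integral_normal_moment_even[OF assms(1), of m 1]
    by (simp add: mult.commute)
qed



lemma lint_nd_prod:
  assumes "V > 0" "\<tau> > 0"
  shows "(LINT \<alpha>|lborel. normal_density m V (Re \<alpha>) * normal_density \<nu> \<tau> (Im \<alpha>)) = 1"
proof -
  have "has_bochner_integral lborel (\<lambda>\<alpha>. normal_density m V (Re \<alpha>) * normal_density \<nu> \<tau> (Im \<alpha>))
     ((LINT x|lborel. normal_density m V x) * (LINT y|lborel. normal_density \<nu> \<tau> y))"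
    by (rule lint_complex_prod) (simp_all add: integrable_normal_density assms)
  then show ?thesis using assms by (simp add: has_bochner_integral_integral_eq integral_normal_density)
qed

lemma posterior:
  fixes \<sigma> \<tau> \<mu> \<nu> q r \<phi> :: real
  assumes \<sigma>: "\<sigma> > 0" and \<tau>: "\<tau> > 0"
  defines "G \<equiv> Gamma_sq r \<phi>"
  shows "evidence (likelihood r \<phi>) (\<lambda>\<alpha>. normal_density \<mu> \<sigma> (Re \<alpha>) * normal_density \<nu> \<tau> (Im \<alpha>)) q
           = normal_density (sqrt 2 * \<mu>) (sqrt (G / 2 + 2 * \<sigma>\<^sup>2)) q"
    and "bayes_update (likelihood r \<phi>) (\<lambda>\<alpha>. normal_density \<mu> \<sigma> (Re \<alpha>) * normal_density \<nu> \<tau> (Im \<alpha>)) q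
           = (\<lambda>\<alpha>. normal_density ((2 * sqrt 2 * \<sigma>\<^sup>2 * q + \<mu> * G) / (4 * \<sigma>\<^sup>2 + G))
                     (sqrt (\<sigma>\<^sup>2 * G / (4 * \<sigma>\<^sup>2 + G))) (Re \<alpha>) * normal_density \<nu> \<tau> (Im \<alpha>))"
proof -
  have G: "G > 0" unfolding G_def by (rule Gamma_sq_pos)
  have sg: "\<sigma>\<^sup>2 > 0" using \<sigma> by simp
  have nz1: "G / 2 + 2 * \<sigma>\<^sup>2 \<noteq> 0" using G sg by linarith
  have nz2: "4 * \<sigma>\<^sup>2 + G \<noteq> 0" using G sg by linarith
  define s where "s = sqrt (G / 2)"
  have s: "s > 0" unfolding s_def using G by simp
  have s2: "s\<^sup>2 = G / 2" unfolding s_def using G by simp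
  define M where "M = (2 * sqrt 2 * \<sigma>\<^sup>2 * q + \<mu> * G) / (4 * \<sigma>\<^sup>2 + G)"
  define V where "V = sqrt (\<sigma>\<^sup>2 * G / (4 * \<sigma>\<^sup>2 + G))"
  define E where "E = normal_density (sqrt 2 * \<mu>) (sqrt (G / 2 + 2 * \<sigma>\<^sup>2)) q"
  have V: "V > 0" unfolding V_def using G \<sigma> by (simp add: add_pos_pos)
  have E: "E > 0" unfolding E_def using G \<sigma> by (intro normal_density_pos) (simp add: add_pos_pos)
  have M': "(sqrt 2 * \<sigma>\<^sup>2 * q + \<mu> * s\<^sup>2) / (s\<^sup>2 + 2 * \<sigma>\<^sup>2) = M"
  proof -
    note nz1 nz2
    then show ?thesis unfolding s2 M_def by (subst frac_eq_eq) (simp_all add: algebra_simps)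
  qed
  have V': "sqrt (s\<^sup>2 * \<sigma>\<^sup>2 / (s\<^sup>2 + 2 * \<sigma>\<^sup>2)) = V"
  proof -
    have "s\<^sup>2 * \<sigma>\<^sup>2 / (s\<^sup>2 + 2 * \<sigma>\<^sup>2) = \<sigma>\<^sup>2 * G / (4 * \<sigma>\<^sup>2 + G)"
    proof -
      note nz1 nz2
      then show ?thesis unfolding s2 by (subst frac_eq_eq) (simp_all add: algebra_simps)
    qed
    then show ?thesis unfolding V_def by simp
  qed
  have pt: "likelihood r \<phi> q \<alpha> * (normal_density \<mu> \<sigma> (Re \<alpha>) * normal_density \<nu> \<tau> (Im \<alpha>))
      = E * (normal_density M V (Re \<alpha>) * normal_density \<nu> \<tau> (Im \<alpha>))" for \<alpha>
  proof -
    have "likelihood r \<phi> q \<alpha> * normal_density \<mu> \<sigma> (Re \<alpha>) = E * normal_density M V (Re \<alpha>)"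
      unfolding likelihood_nd G_def[symmetric] s_def[symmetric] nd_prod[OF s \<sigma>] M' V' unfolding s2 E_def ..
    then show ?thesis by (simp only: mult.assoc[symmetric])
  qed
  have ev: "evidence (likelihood r \<phi>) (\<lambda>\<alpha>. normal_density \<mu> \<sigma> (Re \<alpha>) * normal_density \<nu> \<tau> (Im \<alpha>)) q = E"
    unfolding evidence_def pt using lint_nd_prod[OF V \<tau>] by simp
  then show "evidence (likelihood r \<phi>) (\<lambda>\<alpha>. normal_density \<mu> \<sigma> (Re \<alpha>) * normal_density \<nu> \<tau> (Im \<alpha>)) q
           = normal_density (sqrt 2 * \<mu>) (sqrt (G / 2 + 2 * \<sigma>\<^sup>2)) q" unfolding E_def .
  show "bayes_update (likelihood r \<phi>) (\<lambda>\<alpha>. normal_density \<mu> \<sigma> (Re \<alpha>) * normal_density \<nu> \<tau> (Im \<alpha>)) q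
           = (\<lambda>\<alpha>. normal_density ((2 * sqrt 2 * \<sigma>\<^sup>2 * q + \<mu> * G) / (4 * \<sigma>\<^sup>2 + G))
                     (sqrt (\<sigma>\<^sup>2 * G / (4 * \<sigma>\<^sup>2 + G))) (Re \<alpha>) * normal_density \<nu> \<tau> (Im \<alpha>))"
    unfolding M_def[symmetric] V_def[symmetric]
  proof (rule ext)
    fix \<alpha>
    show "bayes_update (likelihood r \<phi>) (\<lambda>\<alpha>. normal_density \<mu> \<sigma> (Re \<alpha>) * normal_density \<nu> \<tau> (Im \<alpha>)) q \<alpha>
       = normal_density M V (Re \<alpha>) * normal_density \<nu> \<tau> (Im \<alpha>)"
      using ev E lint_nd_prod[OF V \<tau>] unfolding bayes_update_def evidence_def[symmetric] pt by simp
  qed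
qed



lemma gauss_prior_eq:
  assumes "\<sigma> > 0"
  shows "gauss_prior \<alpha>0 \<sigma> = (\<lambda>\<alpha>. normal_density (Re \<alpha>0) \<sigma> (Re \<alpha>) * normal_density (Im \<alpha>0) \<sigma> (Im \<alpha>))"
  using gauss_prior_nd[OF assms] by (rule ext)

lemma Vpos:
  assumes "\<sigma> > 0"
  shows "sqrt (\<sigma>\<^sup>2 * Gamma_sq r \<phi> / (4 * \<sigma>\<^sup>2 + Gamma_sq r \<phi>)) > 0"
proof -
  have "Gamma_sq r \<phi> > 0" by (rule Gamma_sq_pos)
  moreover have "\<sigma>\<^sup>2 > 0" using assms by simp
  ultimately show ?thesis by (simp add: add_pos_pos)
qed

lemma Gamma0: "Gamma_sq r 0 = exp (- (2 * r))"
  unfolding Gamma_sq_def by (simp add: cosh_minus_sinh)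

lemma Gamma_ge:
  assumes "r \<ge> 0"
  shows "Gamma_sq r 0 \<le> Gamma_sq r \<phi>"
proof -
  have "cos \<phi> * sinh (2 * r) \<le> 1 * sinh (2 * r)"
    by (rule mult_right_mono) (use assms in simp_all)
  then show ?thesis unfolding Gamma_sq_def by simp
qed

lemma frac_mono:
  fixes \<sigma> g1 g2 :: real
  assumes "\<sigma> > 0" "0 < g1" "g1 \<le> g2"
  shows "\<sigma>\<^sup>2 * g1 / (4 * \<sigma>\<^sup>2 + g1) \<le> \<sigma>\<^sup>2 * g2 / (4 * \<sigma>\<^sup>2 + g2)"
proof -
  have s: "\<sigma>\<^sup>2 > 0" using assms by simp
  have p1: "4 * \<sigma>\<^sup>2 + g1 > 0" and p2: "4 * \<sigma>\<^sup>2 + g2 > 0" using s assms by linarith+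
  have d: "\<sigma>\<^sup>2 * g2 * (4 * \<sigma>\<^sup>2 + g1) - \<sigma>\<^sup>2 * g1 * (4 * \<sigma>\<^sup>2 + g2) = 4 * \<sigma>\<^sup>2 * \<sigma>\<^sup>2 * (g2 - g1)"
    by algebra
  have "0 \<le> 4 * \<sigma>\<^sup>2 * \<sigma>\<^sup>2 * (g2 - g1)" using assms by simp
  then have "\<sigma>\<^sup>2 * g1 * (4 * \<sigma>\<^sup>2 + g2) \<le> \<sigma>\<^sup>2 * g2 * (4 * \<sigma>\<^sup>2 + g1)" using d by linarith
  then show ?thesis using p1 p2 by (simp add: divide_le_eq le_divide_eq mult.commute mult.left_commute)
qed



lemma seq_claim:
  fixes r \<sigma>0 :: real and \<alpha>0 :: complex
  assumes \<sigma>0: "\<sigma>0 > 0"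
  shows "\<exists>\<mu>. seq_post (likelihood r 0) (gauss_prior \<alpha>0 \<sigma>0) qs m =
     (\<lambda>\<alpha>. normal_density \<mu> (sqrt (inverse (1 / \<sigma>0\<^sup>2 + 4 * real m * exp (2 * r)))) (Re \<alpha>)
           * normal_density (Im \<alpha>0) \<sigma>0 (Im \<alpha>))"
proof (induction m)
  case 0
  have "sqrt (inverse (1 / \<sigma>0\<^sup>2 + 4 * real 0 * exp (2 * r))) = \<sigma>0" using \<sigma>0 by simp
  then show ?case using gauss_prior_eq[OF \<sigma>0, of \<alpha>0] by auto
next
  case (Suc m)
  then obtain \<mu> where IH: "seq_post (likelihood r 0) (gauss_prior \<alpha>0 \<sigma>0) qs m =
     (\<lambda>\<alpha>. normal_density \<mu> (sqrt (inverse (1 / \<sigma>0\<^sup>2 + 4 * real m * exp (2 * r)))) (Re \<alpha>)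
           * normal_density (Im \<alpha>0) \<sigma>0 (Im \<alpha>))" by blast
  define A where "A = 1 / \<sigma>0\<^sup>2 + 4 * real m * exp (2 * r)"
  have A: "A > 0" unfolding A_def using \<sigma>0 by (simp add: add_pos_nonneg)
  define S where "S = sqrt (inverse A)"
  have S: "S > 0" unfolding S_def using A by simp
  have S2: "S\<^sup>2 = inverse A" unfolding S_def using A by simp
  have e: "exp (2 * r) > 0" by simp
  have key: "S\<^sup>2 * Gamma_sq r 0 / (4 * S\<^sup>2 + Gamma_sq r 0) = inverse (1 / \<sigma>0\<^sup>2 + 4 * real (Suc m) * exp (2 * r))"
  proof -
    have "1 / \<sigma>0\<^sup>2 + 4 * real (Suc m) * exp (2 * r) = A + 4 * exp (2 * r)"
      unfolding A_def by (simp add: algebra_simps)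
    moreover have "inverse A * exp (- (2 * r)) / (4 * inverse A + exp (- (2 * r))) = inverse (A + 4 * exp (2 * r))"
      using A e by (simp add: exp_minus field_simps)
    ultimately show ?thesis unfolding S2 Gamma0 by simp
  qed
  show ?case
    using posterior(2)[OF S \<sigma>0, of r 0 \<mu> "Im \<alpha>0" "qs m"] IH
    unfolding A_def[symmetric] S_def[symmetric] key by auto
qed

theorem mainTheorem2:
  fixes r \<phi> \<sigma>0 :: real and \<alpha>0 :: complex
  assumes "r \<ge> 0" and "0 \<le> \<phi>" and "\<phi> < 2 * pi" and "\<sigma>0 > 0"
  shows
    "(\<forall>q y. marg_I (bayes_update (likelihood r \<phi>) (gauss_prior \<alpha>0 \<sigma>0) q) y
              = marg_I (gauss_prior \<alpha>0 \<sigma>0) y)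
   \<and> (\<forall>q x. marg_R (bayes_update (likelihood r \<phi>) (gauss_prior \<alpha>0 \<sigma>0) q) x
              = normal_density
                  ((2 * sqrt 2 * \<sigma>0\<^sup>2 * q + Re \<alpha>0 * Gamma_sq r \<phi>) / (4 * \<sigma>0\<^sup>2 + Gamma_sq r \<phi>))
                  (sqrt (\<sigma>0\<^sup>2 * Gamma_sq r \<phi> / (4 * \<sigma>0\<^sup>2 + Gamma_sq r \<phi>))) x)
   \<and> (\<forall>\<phi>'\<in>{0..<2 * pi}. \<forall>q q'.
         var_R (bayes_update (likelihood r 0) (gauss_prior \<alpha>0 \<sigma>0) q)
           \<le> var_R (bayes_update (likelihood r \<phi>') (gauss_prior \<alpha>0 \<sigma>0) q'))
   \<and> avg_post_var_R (likelihood r 0) (gauss_prior \<alpha>0 \<sigma>0) = inverse (1 / \<sigma>0\<^sup>2 + 4 * exp (2 * r))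
   \<and> (\<forall>(m::nat) (qs::nat \<Rightarrow> real). \<exists>\<mu>. \<forall>x.
         marg_R (seq_post (likelihood r 0) (gauss_prior \<alpha>0 \<sigma>0) qs m) x
           = normal_density \<mu> (sqrt (inverse (1 / \<sigma>0\<^sup>2 + 4 * real m * exp (2 * r)))) x)"
proof -
  note \<sigma>0 = assms(4)
  note P = gauss_prior_eq[OF \<sigma>0, of \<alpha>0]
  note post = posterior(2)[OF \<sigma>0 \<sigma>0, of _ _ "Re \<alpha>0" "Im \<alpha>0"]
  note ev = posterior(1)[OF \<sigma>0 \<sigma>0, of _ _ "Re \<alpha>0" "Im \<alpha>0"]
  have I1: "integral\<^sup>L lborel (normal_density \<mu> \<sigma>0) = 1" for \<mu>
    using \<sigma>0 by (rule integral_normal_density)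
  have VP: "\<And>r \<phi>. sqrt (\<sigma>0\<^sup>2 * Gamma_sq r \<phi> / (4 * \<sigma>0\<^sup>2 + Gamma_sq r \<phi>)) > 0"
    using Vpos[OF \<sigma>0] .
  have VV: "\<And>r \<phi>. (sqrt (\<sigma>0\<^sup>2 * Gamma_sq r \<phi> / (4 * \<sigma>0\<^sup>2 + Gamma_sq r \<phi>)))\<^sup>2
      = \<sigma>0\<^sup>2 * Gamma_sq r \<phi> / (4 * \<sigma>0\<^sup>2 + Gamma_sq r \<phi>)"
    using VP by (simp add: less_imp_le)
  have var: "var_R (bayes_update (likelihood r \<phi>) (gauss_prior \<alpha>0 \<sigma>0) q)
      = \<sigma>0\<^sup>2 * Gamma_sq r \<phi> / (4 * \<sigma>0\<^sup>2 + Gamma_sq r \<phi>)" for r \<phi> q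
    unfolding P post var_R_prod[OF VP \<sigma>0] VV ..
  have c1: "\<forall>q y. marg_I (bayes_update (likelihood r \<phi>) (gauss_prior \<alpha>0 \<sigma>0) q) y
              = marg_I (gauss_prior \<alpha>0 \<sigma>0) y"
  proof (intro allI)
    fix q y
    have i: "integral\<^sup>L lborel (normal_density m (sqrt (\<sigma>0\<^sup>2 * Gamma_sq r \<phi> / (4 * \<sigma>0\<^sup>2 + Gamma_sq r \<phi>)))) = 1" for m
      using VP by (rule integral_normal_density)
    show "marg_I (bayes_update (likelihood r \<phi>) (gauss_prior \<alpha>0 \<sigma>0) q) y
              = marg_I (gauss_prior \<alpha>0 \<sigma>0) y"
      unfolding P post marg_I_prod i I1 ..
  qed
  have c2: "\<forall>q x. marg_R (bayes_update (likelihood r \<phi>) (gauss_prior \<alpha>0 \<sigma>0) q) x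
              = normal_density
                  ((2 * sqrt 2 * \<sigma>0\<^sup>2 * q + Re \<alpha>0 * Gamma_sq r \<phi>) / (4 * \<sigma>0\<^sup>2 + Gamma_sq r \<phi>))
                  (sqrt (\<sigma>0\<^sup>2 * Gamma_sq r \<phi> / (4 * \<sigma>0\<^sup>2 + Gamma_sq r \<phi>))) x"
    unfolding P post marg_R_prod I1 by simp
  have c3: "\<forall>\<phi>'\<in>{0..<2 * pi}. \<forall>q q'.
         var_R (bayes_update (likelihood r 0) (gauss_prior \<alpha>0 \<sigma>0) q)
           \<le> var_R (bayes_update (likelihood r \<phi>') (gauss_prior \<alpha>0 \<sigma>0) q')"
    unfolding var using frac_mono[OF \<sigma>0 Gamma_sq_pos Gamma_ge[OF assms(1)]] by blast
  have c4: "avg_post_var_R (likelihood r 0) (gauss_prior \<alpha>0 \<sigma>0) = inverse (1 / \<sigma>0\<^sup>2 + 4 * exp (2 * r))"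
  proof -
    define C where "C = \<sigma>0\<^sup>2 * Gamma_sq r 0 / (4 * \<sigma>0\<^sup>2 + Gamma_sq r 0)"
    have Tp: "sqrt (Gamma_sq r 0 / 2 + 2 * \<sigma>0\<^sup>2) > 0"
      using Gamma_sq_pos[of r 0] \<sigma>0 by (simp add: add_pos_pos)
    have "avg_post_var_R (likelihood r 0) (gauss_prior \<alpha>0 \<sigma>0)
        = (LINT q|lborel. normal_density (sqrt 2 * Re \<alpha>0) (sqrt (Gamma_sq r 0 / 2 + 2 * \<sigma>0\<^sup>2)) q * C)"
      unfolding avg_post_var_R_def var C_def unfolding P ev ..
    also have "\<dots> = C" using integral_normal_density[OF Tp] by simp
    also have "C = inverse (1 / \<sigma>0\<^sup>2 + 4 * exp (2 * r))"
      unfolding C_def Gamma0 using \<sigma>0 by (simp add: exp_minus field_simps)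
    finally show ?thesis .
  qed
  have c5: "\<forall>(m::nat) (qs::nat \<Rightarrow> real). \<exists>\<mu>. \<forall>x.
         marg_R (seq_post (likelihood r 0) (gauss_prior \<alpha>0 \<sigma>0) qs m) x
           = normal_density \<mu> (sqrt (inverse (1 / \<sigma>0\<^sup>2 + 4 * real m * exp (2 * r)))) x"
  proof (intro allI)
    fix m qs
    obtain \<mu> where h: "seq_post (likelihood r 0) (gauss_prior \<alpha>0 \<sigma>0) qs m =
     (\<lambda>\<alpha>. normal_density \<mu> (sqrt (inverse (1 / \<sigma>0\<^sup>2 + 4 * real m * exp (2 * r)))) (Re \<alpha>)
           * normal_density (Im \<alpha>0) \<sigma>0 (Im \<alpha>))"
      using seq_claim[OF \<sigma>0] by blast
    show "\<exists>\<mu>. \<forall>x. marg_R (seq_post (likelihood r 0) (gauss_prior \<alpha>0 \<sigma>0) qs m) x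
           = normal_density \<mu> (sqrt (inverse (1 / \<sigma>0\<^sup>2 + 4 * real m * exp (2 * r)))) x"
      unfolding h marg_R_prod I1 by auto
  qed
  show ?thesis using c1 c2 c3 c4 c5 by blast
qed

end
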